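(* Let $X$, $Y$ be Hilbert spaces, and let $E_0\in L(X)$ be self-adjoint, nonnegative and with closed range. Let $A_0:X\supset{\rm dom}\,A_0\to X$ be linear and let $\Gamma\in L({\rm dom}\,A_0,Y)$ be surjective, where ${\rm dom}\,A_0$ is equipped with the graph norm $\|x\|_{{\rm dom}\,A_0}=(\|x\|_X^2+\|A_0x\|_X^2)^{1/2}$. Assume that there exists $\omega\in\mathbb{R}$ such that ${\rm Re}\,((A_0-\omega E_0)x,x)_X\le0$ for all $x\in\ker\Gamma$, and some $\lambda_0>\omega$ such that $\lambda_0E_0-A_0|_{\ker\Gamma}:\ker\Gamma\to X$ is surjective. Moreover assume $\ker E_0\cap\ker A_0\cap\ker\Gamma=\{0\}$. Let $Z=X\times Y$ and define $E\in L(X,Z)$ and $A:X\supset{\rm dom}\,A_0\to Z$ by $Ex=(E_0x,0)$, $Ax=(A_0x,\Gamma x)$. Then $(\omega,\infty)\subseteq\rho(E,A)$ and the left resolvent $R_l(\lambda)=E(A-\lambda E)^{-1}$ fulfills condition $\mathbf{(D_2)}$. If moreover $\ker E_0=\{0\}$, then the right resolvent $R_r(\lambda)=(A-\lambda E)^{-1}E$ fulfills condition $\mathbf{(D_1)}$.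
   Context: $\rho(E,A)=\{\lambda\in\mathbb{C}:\lambda E-A:{\rm dom}\,A\to Z\text{ bijective}\}$; $R_l$ (with values in $L(Z)$) and $R_r$ (with values in $L(X)$) are pseudo-resolvents on $\Omega=\rho(E,A)$, i.e. $\frac{R(\lambda)-R(\mu)}{\mu-\lambda}=R(\lambda)R(\mu)$ for $\lambda\ne\mu$. Condition $\mathbf{(D_k)}$ for a pseudo-resolvent $R:\Omega\to L(V)$ on a Banach space $V$ ($k\ge1$): there exist $\omega'\in\mathbb{R}$, $M>0$ with $[\omega',\infty)\subseteq\Omega$ and $\|R(\lambda)v\|\le\frac{M}{\lambda-\omega'}\|v\|$ for all $\lambda\in(\omega',\infty)$ and $v\in{\rm ran}\,R(\omega')^{k-1}$ (with ${\rm ran}\,R(\omega')^0=V$). *)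

theory Defs
  imports "HOL-Analysis.Analysis"
begin

text \<open>The complex inner product is recovered from the real one below
(its real part is the real inner product).\<close>

class chilbert = real_inner + complete_space +
  fixes scaleC :: "complex \<Rightarrow> 'a \<Rightarrow> 'a"
  assumes scaleC_add_right: "scaleC a (x + y) = scaleC a x + scaleC a y"
    and scaleC_add_left: "scaleC (a + b) x = scaleC a x + scaleC b x"
    and scaleC_scaleC: "scaleC a (scaleC b x) = scaleC (a * b) x"
    and scaleC_of_real: "scaleC (complex_of_real r) x = scaleR r x"
    and norm_scaleC: "norm (scaleC a x) = cmod a * norm x"

text \<open>Complex inner product, linear in the first and conjugate linear in the second argument.\<close>
definition cinner :: "'a::chilbert \<Rightarrow> 'a \<Rightarrow> complex" where
  "cinner x y = Complex (inner x y) (inner x (scaleC \<i> y))"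

instantiation prod :: (chilbert, chilbert) chilbert
begin
definition scaleC_prod_def: "scaleC a z = (scaleC a (fst z), scaleC a (snd z))"
instance
proof
  fix a b :: complex and x y :: "'a \<times> 'b" and r :: real
  show "scaleC a (x + y) = scaleC a x + scaleC a y"
    by (simp add: scaleC_prod_def scaleC_add_right)
  show "scaleC (a + b) x = scaleC a x + scaleC b x"
    by (simp add: scaleC_prod_def scaleC_add_left)
  show "scaleC a (scaleC b x) = scaleC (a * b) x"
    by (simp add: scaleC_prod_def scaleC_scaleC)
  show "scaleC (complex_of_real r) x = scaleR r x"
    by (simp add: scaleC_prod_def scaleC_of_real scaleR_prod_def)
  have "norm (scaleC a x) = sqrt ((cmod a)\<^sup>2 * ((norm (fst x))\<^sup>2 + (norm (snd x))\<^sup>2))"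
    by (simp add: scaleC_prod_def norm_Pair norm_scaleC power_mult_distrib algebra_simps)
  also have "\<dots> = cmod a * norm x"
    by (simp add: real_sqrt_mult norm_prod_def)
  finally show "norm (scaleC a x) = cmod a * norm x" .
qed
end

definition csubspace :: "'a::chilbert set \<Rightarrow> bool" where
  "csubspace D \<longleftrightarrow> 0 \<in> D \<and> (\<forall>x\<in>D. \<forall>y\<in>D. x + y \<in> D) \<and> (\<forall>a. \<forall>x\<in>D. scaleC a x \<in> D)"

text \<open>Complex-linear map defined on a subspace D (its values outside D are irrelevant).\<close>
definition clinear_on :: "'a::chilbert set \<Rightarrow> ('a \<Rightarrow> 'b::chilbert) \<Rightarrow> bool" where
  "clinear_on D f \<longleftrightarrow> (\<forall>x\<in>D. \<forall>y\<in>D. f (x + y) = f x + f y) \<and> (\<forall>a. \<forall>x\<in>D. f (scaleC a x) = scaleC a (f x))"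

definition bounded_clinear :: "('a::chilbert \<Rightarrow> 'b::chilbert) \<Rightarrow> bool" where
  "bounded_clinear f \<longleftrightarrow> clinear_on UNIV f \<and> (\<exists>K. \<forall>x. norm (f x) \<le> norm x * K)"

definition graph_norm :: "('a::chilbert \<Rightarrow> 'a) \<Rightarrow> 'a \<Rightarrow> real" where
  "graph_norm A0 x = sqrt ((norm x)\<^sup>2 + (norm (A0 x))\<^sup>2)"

definition pencil_rho :: "('x::chilbert \<Rightarrow> 'z::chilbert) \<Rightarrow> ('x \<Rightarrow> 'z) \<Rightarrow> 'x set \<Rightarrow> complex set" where
  "pencil_rho E A D = {l. bij_betw (\<lambda>x. scaleC l (E x) - A x) D UNIV}"

definition pencil_inv :: "('x::chilbert \<Rightarrow> 'z::chilbert) \<Rightarrow> ('x \<Rightarrow> 'z) \<Rightarrow> 'x set \<Rightarrow> complex \<Rightarrow> 'z \<Rightarrow> 'x" where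
  "pencil_inv E A D l z = (THE x. x \<in> D \<and> A x - scaleC l (E x) = z)"

definition left_resolvent :: "('x::chilbert \<Rightarrow> 'z::chilbert) \<Rightarrow> ('x \<Rightarrow> 'z) \<Rightarrow> 'x set \<Rightarrow> complex \<Rightarrow> 'z \<Rightarrow> 'z" where
  "left_resolvent E A D l z = E (pencil_inv E A D l z)"

definition right_resolvent :: "('x::chilbert \<Rightarrow> 'z::chilbert) \<Rightarrow> ('x \<Rightarrow> 'z) \<Rightarrow> 'x set \<Rightarrow> complex \<Rightarrow> 'x \<Rightarrow> 'x" where
  "right_resolvent E A D l x = pencil_inv E A D l (E x)"

definition cond_D :: "nat \<Rightarrow> complex set \<Rightarrow> (complex \<Rightarrow> 'v::real_normed_vector \<Rightarrow> 'v) \<Rightarrow> bool" where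
  "cond_D k \<Omega> R \<longleftrightarrow> (\<exists>\<omega>' M. M > 0 \<and> (\<forall>t. t \<ge> \<omega>' \<longrightarrow> complex_of_real t \<in> \<Omega>) \<and>
     (\<forall>t. t > \<omega>' \<longrightarrow> (\<forall>v \<in> range (R (complex_of_real \<omega>') ^^ (k - 1)).
        norm (R (complex_of_real t) v) \<le> M / (t - \<omega>') * norm v)))"

end

theory Submission
  imports Defs
begin

instance chilbert \<subseteq> banach ..

lemma quad_disc:
  fixes a b c :: real
  assumes "\<And>t. 0 \<le> a + 2 * t * b + t^2 * c" "c \<ge> 0"
  shows "b^2 \<le> a * c"
proof (cases "c = 0")
  case True
  show ?thesis
  proof (cases "b = 0")
    case False
    have "0 \<le> a + 2 * (-(a+1)/(2*b)) * b + (-(a+1)/(2*b))^2 * c" by (rule assms(1))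
    then show ?thesis using False True by (simp add: field_simps)
  qed (use True assms in simp)
next
  case False
  then have c: "c > 0" using assms by simp
  have "0 \<le> a + 2 * (-b/c) * b + (-b/c)^2 * c" by (rule assms(1))
  then have "0 \<le> a - b^2 / c" using c by (simp add: field_simps power2_eq_square)
  then show ?thesis using c by (simp add: field_simps)
qed

lemma form_CS:
  fixes E :: "'a::real_inner \<Rightarrow> 'a"
  assumes lin: "linear E" and sa: "\<And>x y. inner (E x) y = inner x (E y)"
    and pos: "\<And>x. 0 \<le> inner (E x) x"
  shows "(inner (E x) y)^2 \<le> inner (E x) x * inner (E y) y"
proof (rule quad_disc)
  show "0 \<le> inner (E y) y" by (rule pos)
  fix t :: real
  have "0 \<le> inner (E (x + t *\<^sub>R y)) (x + t *\<^sub>R y)" by (rule pos)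
  also have "\<dots> = inner (E x) x + t * inner (E x) y + t * inner (E y) x + t * t * inner (E y) y"
    using lin by (simp add: linear_add linear_scale inner_add_left inner_add_right algebra_simps)
  also have "inner (E y) x = inner (E x) y" by (metis sa inner_commute)
  finally show "0 \<le> inner (E x) x + 2 * t * inner (E x) y + t^2 * inner (E y) y"
    by (simp add: power2_eq_square algebra_simps)
qed

lemma form_K:
  fixes E :: "'a::real_inner \<Rightarrow> 'a"
  assumes lin: "bounded_linear E" and sa: "\<And>x y. inner (E x) y = inner x (E y)"
    and pos: "\<And>x. 0 \<le> inner (E x) x"
  shows "\<exists>K>0. \<forall>x. norm (E x) \<le> K * norm x \<and> (norm (E x))^2 \<le> K * inner (E x) x"
proof -
  interpret E: bounded_linear E by fact
  obtain B where B: "B > 0" "\<And>x. norm (E x) \<le> norm x * B" using E.pos_bounded by blast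
  have "(norm (E x))^2 \<le> B * inner (E x) x" for x
  proof (cases "E x = 0")
    case True then show ?thesis using pos[of x] B by simp
  next
    case False
    have cs: "(inner (E x) (E x))^2 \<le> inner (E x) x * inner (E (E x)) (E x)"
      by (rule form_CS[OF E.linear_axioms sa pos])
    have "inner (E (E x)) (E x) \<le> norm (E (E x)) * norm (E x)" by (rule norm_cauchy_schwarz)
    also have "\<dots> \<le> (norm (E x) * B) * norm (E x)" using B(2)[of "E x"] by (simp add: mult_right_mono)
    finally have 2: "inner (E (E x)) (E x) \<le> B * (norm (E x))^2" by (simp add: power2_eq_square algebra_simps)
    have "(norm (E x))^2 * (norm (E x))^2 \<le> inner (E x) x * inner (E (E x)) (E x)"
      using cs by (simp add: power2_norm_eq_inner[symmetric] power2_eq_square)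
    also have "\<dots> \<le> inner (E x) x * (B * (norm (E x))^2)" using 2 pos[of x] by (rule mult_left_mono)
    finally have "(norm (E x))^2 * (norm (E x))^2 \<le> (B * inner (E x) x) * (norm (E x))^2" by (simp add: algebra_simps)
    moreover have "(norm (E x))^2 > 0" using False by simp
    ultimately show ?thesis by (metis mult_le_cancel_right_pos)
  qed
  then show ?thesis using B by (intro exI[of _ B]) (auto simp: mult.commute)
qed

lemma pencil_inv_prop:
  assumes "l \<in> pencil_rho E A D"
  shows "pencil_inv E A D l z \<in> D \<and> A (pencil_inv E A D l z) - scaleC l (E (pencil_inv E A D l z)) = z"
proof -
  have bij: "bij_betw (\<lambda>x. scaleC l (E x) - A x) D UNIV" using assms by (simp add: pencil_rho_def)
  then have "- z \<in> (\<lambda>x. scaleC l (E x) - A x) ` D" by (simp add: bij_betw_def)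
  then obtain x where x0: "- z = scaleC l (E x) - A x" and xD: "x \<in> D" by (rule imageE)
  have x: "x \<in> D" "scaleC l (E x) - A x = - z" using x0 xD by simp_all
  have ex: "\<exists>!x. x \<in> D \<and> A x - scaleC l (E x) = z"
  proof
    show "x \<in> D \<and> A x - scaleC l (E x) = z" using x by (metis minus_diff_eq minus_equation_iff)
    fix x' assume x': "x' \<in> D \<and> A x' - scaleC l (E x') = z"
    then have "scaleC l (E x') - A x' = - z" by (metis minus_diff_eq)
    then have "scaleC l (E x') - A x' = scaleC l (E x) - A x" using x by simp
    moreover have "inj_on (\<lambda>x. scaleC l (E x) - A x) D" using bij by (simp add: bij_betw_def)
    ultimately show "x' = x" using x x' by (meson inj_onD)
  qed
  show ?thesis unfolding pencil_inv_def using theI'[OF ex] .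
qed

lemma arith1:
  fixes p n Q :: real
  assumes "0 \<le> n" "0 \<le> Q" "p * n^2 \<le> Q * n"
  shows "p * n \<le> Q"
proof (cases "n = 0")
  case False
  then have "n > 0" using assms by simp
  then show ?thesis using assms(3) by (simp add: power2_eq_square mult.assoc[symmetric] mult_le_cancel_right)
qed (use assms in simp)

lemma arith2:
  fixes p p' n Q M v :: real
  assumes "0 < p'" "p' \<le> p" "p * n \<le> Q * v" "0 \<le> n" "0 \<le> v" "0 \<le> Q" "Q \<le> M"
  shows "n \<le> M / p' * v"
proof -
  have "p' * n \<le> p * n" using assms by (simp add: mult_right_mono)
  also have "\<dots> \<le> M * v" using assms by (meson mult_right_mono order_trans)
  finally show ?thesis using assms(1) by (simp add: field_simps)
qed


lemma approx_preimage:
  fixes E :: "'a::real_normed_vector \<Rightarrow> 'b::banach"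
  assumes lin: "bounded_linear E" and cl: "closed (range E)"
  shows "\<exists>C\<ge>0. \<forall>w\<in>range E. \<forall>e>0. \<exists>x. norm x \<le> C * norm w \<and> norm (E x - w) < e"
proof -
  interpret E: bounded_linear E by fact
  define F where "F = range E"
  define K where "K n = closure (E ` cball 0 (real n))" for n :: nat
  have KF: "K n \<subseteq> F" for n
    unfolding K_def F_def using cl by (simp add: closure_minimal image_mono)
  have UK: "\<Union>(range K) = F"
  proof
    show "\<Union>(range K) \<subseteq> F" using KF by auto
    show "F \<subseteq> \<Union>(range K)"
    proof
      fix w assume "w \<in> F"
      then obtain x where x: "w = E x" by (auto simp: F_def)
      obtain n :: nat where "norm x \<le> real n" using real_arch_simple by blast
      then have "w \<in> K n" unfolding K_def x
        by (intro subsetD[OF closure_subset]) auto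
      then show "w \<in> \<Union>(range K)" by auto
    qed
  qed
  have "\<exists>n. (top_of_set F) interior_of (K n) \<noteq> {}"
  proof (rule ccontr)
    assume "\<not> ?thesis"
    then have emp: "\<And>n. (top_of_set F) interior_of (K n) = {}" by auto
    have "(top_of_set F) interior_of \<Union>(range K) = {}"
    proof (rule Baire_category_alt)
      show "completely_metrizable_space (top_of_set F) \<or> locally_compact_space (top_of_set F) \<and> regular_space (top_of_set F)"
        using completely_metrizable_space_closedin[OF completely_metrizable_space_euclidean] cl
        unfolding F_def using closed_closedin by blast
      show "countable (range K)" by simp
      fix T assume "T \<in> range K"
      then obtain n where T: "T = K n" by auto
      show "closedin (top_of_set F) T \<and> (top_of_set F) interior_of T = {}"
      proof
        show "closedin (top_of_set F) T" unfolding T K_def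
          using KF[of n] closed_subset[of "K n" F] unfolding K_def by simp
        show "(top_of_set F) interior_of T = {}" using emp T by simp
      qed
    qed
    moreover have "0 \<in> F" unfolding F_def using lin linear_0 bounded_linear.linear by (metis rangeI)
    moreover have "(top_of_set F) interior_of F = F"
      by (metis interior_of_topspace topspace_euclidean_subtopology)
    ultimately show False using UK by simp
  qed
  then obtain n w0 where w0: "w0 \<in> (top_of_set F) interior_of (K n)" by blast
  then have "openin (top_of_set F) ((top_of_set F) interior_of (K n))" by simp
  then obtain r where r: "r > 0" "ball w0 r \<inter> F \<subseteq> (top_of_set F) interior_of (K n)"
    using w0 unfolding openin_contains_ball by blast
  have intK: "(top_of_set F) interior_of (K n) \<subseteq> K n" by (rule interior_of_subset)
  have w0F: "w0 \<in> F" using w0 intK KF by blast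
  have w0K: "w0 \<in> K n" using w0 intK by blast
  have approxK: "\<exists>x. norm x \<le> real n \<and> norm (E x - v) < e" if "v \<in> K n" "e > 0" for v e
  proof -
    from that obtain u where "u \<in> E ` cball 0 (real n)" "dist u v < e"
      unfolding K_def closure_approachable by blast
    then show ?thesis by (auto simp: dist_norm)
  qed
  have small: "\<exists>x. norm x \<le> 2 * real n \<and> norm (E x - w) < e"
    if wF: "w \<in> F" and wr: "norm w < r" and ep: "e > 0" for w e
  proof -
    have "w0 + w \<in> F" using that w0F lin unfolding F_def
      by (metis bounded_linear.linear linear_add rangeE rangeI)
    moreover have "w0 + w \<in> ball w0 r" using that by (simp add: dist_norm)
    ultimately have "w0 + w \<in> K n" using r intK by blast
    then obtain x1 where x1: "norm x1 \<le> real n" "norm (E x1 - (w0 + w)) < e/2"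
      using approxK[of "w0+w" "e/2"] ep by auto
    obtain x2 where x2: "norm x2 \<le> real n" "norm (E x2 - w0) < e/2"
      using approxK[OF w0K, of "e/2"] ep by auto
    have "E (x1 - x2) - w = (E x1 - (w0 + w)) - (E x2 - w0)"
      using lin by (simp add: E.diff algebra_simps)
    then have "norm (E (x1 - x2) - w) \<le> norm (E x1 - (w0 + w)) + norm (E x2 - w0)"
      by (metis norm_triangle_ineq4)
    moreover have "norm (x1 - x2) \<le> norm x1 + norm x2" by (rule norm_triangle_ineq4)
    ultimately show ?thesis using x1 x2 by (intro exI[of _ "x1 - x2"]) auto
  qed
  show ?thesis
  proof (intro exI[of _ "4 * real n / r"] conjI ballI allI impI)
    show "0 \<le> 4 * real n / r" using r by simp
    fix w e assume wF: "w \<in> range E" and e: "(e::real) > 0"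
    show "\<exists>x. norm x \<le> 4 * real n / r * norm w \<and> norm (E x - w) < e"
    proof (cases "w = 0")
      case True
      then show ?thesis using e lin by (intro exI[of _ 0]) (simp add: E.zero)
    next
      case False
      define s where "s = r / (2 * norm w)"
      have s: "s > 0" using False r by (simp add: s_def)
      have "s *\<^sub>R w \<in> F" using wF lin unfolding F_def
        by (metis bounded_linear.linear linear_scale rangeE rangeI)
      moreover have "norm (s *\<^sub>R w) < r" using False r s by (simp add: s_def)
      ultimately obtain x where x: "norm x \<le> 2 * real n" "norm (E x - s *\<^sub>R w) < e * s"
        using small[of "s *\<^sub>R w" "e * s"] e s by auto
      have "E ((1/s) *\<^sub>R x) - w = (1/s) *\<^sub>R (E x - s *\<^sub>R w)"
        using lin s by (simp add: E.scaleR algebra_simps)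
      then have "norm (E ((1/s) *\<^sub>R x) - w) = norm (E x - s *\<^sub>R w) / s"
        using s by simp
      also have "\<dots> < e" using x s by (simp add: divide_less_eq)
      finally have 1: "norm (E ((1/s) *\<^sub>R x) - w) < e" .
      have "norm ((1/s) *\<^sub>R x) = norm x / s" using s by simp
      also have "\<dots> \<le> 2 * real n / s" using x s by (simp add: divide_right_mono)
      also have "\<dots> = 4 * real n / r * norm w" using False r by (simp add: s_def field_simps)
      finally show ?thesis using 1 by blast
    qed
  qed
qed

lemma exact_preimage:
  fixes E :: "'a::banach \<Rightarrow> 'b::banach"
  assumes lin: "bounded_linear E" and cl: "closed (range E)"
  shows "\<exists>C\<ge>0. \<forall>w\<in>range E. \<exists>x. E x = w \<and> norm x \<le> C * norm w"
proof -
  interpret E: bounded_linear E by fact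
  obtain C where C: "C \<ge> 0" "\<forall>w\<in>range E. \<forall>e>0. \<exists>x. norm x \<le> C * norm w \<and> norm (E x - w) < e"
    using approx_preimage[OF lin cl] by blast
  have "\<forall>r\<in>range E. \<exists>y. norm y \<le> C * norm r \<and> norm (E y - r) \<le> norm r / 2"
  proof
    fix r assume r: "r \<in> range E"
    show "\<exists>y. norm y \<le> C * norm r \<and> norm (E y - r) \<le> norm r / 2"
    proof (cases "r = 0")
      case True then show ?thesis by (intro exI[of _ 0]) (simp add: E.zero)
    next
      case False
      then obtain y where "norm y \<le> C * norm r" "norm (E y - r) < norm r / 2"
        using C(2) r by (meson half_gt_zero zero_less_norm_iff)
      then show ?thesis by (intro exI[of _ y]) auto
    qed
  qed
  then obtain g where g: "\<And>r. r \<in> range E \<Longrightarrow> norm (g r) \<le> C * norm r \<and> norm (E (g r) - r) \<le> norm r / 2"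
    by metis
  show ?thesis
  proof (intro exI[of _ "2 * C"] conjI ballI)
    show "0 \<le> 2 * C" using C by simp
    fix w assume w: "w \<in> range E"
    define h where "h r = r - E (g r)" for r
    define s where "s n = (h ^^ n) w" for n
    have s_Suc: "s (Suc n) = h (s n)" for n by (simp add: s_def)
    have sE: "s n \<in> range E" for n
    proof (induction n)
      case 0 then show ?case using w by (simp add: s_def)
    next
      case (Suc n)
      then obtain x where "s n = E x" by auto
      then have "s (Suc n) = E (x - g (s n))" by (simp add: s_Suc h_def E.diff)
      then show ?case by auto
    qed
    have sn: "norm (s n) \<le> norm w * (1/2)^n" for n
    proof (induction n)
      case 0 then show ?case by (simp add: s_def)
    next
      case (Suc n)
      have "norm (s (Suc n)) = norm (E (g (s n)) - s n)"
        by (simp add: s_Suc h_def norm_minus_commute)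
      also have "\<dots> \<le> norm (s n) / 2" using g[OF sE[of n]] by blast
      also have "\<dots> \<le> norm w * (1/2)^(Suc n)" using Suc by simp
      finally show ?case .
    qed
    define x where "x n = g (s n)" for n
    have xn: "norm (x n) \<le> C * norm w * (1/2)^n" for n
    proof -
      have "norm (x n) \<le> C * norm (s n)" using g[OF sE[of n]] by (simp add: x_def)
      also have "\<dots> \<le> C * (norm w * (1/2)^n)" using sn[of n] C(1) by (rule mult_left_mono)
      finally show ?thesis by simp
    qed
    have geo: "summable (\<lambda>n. C * norm w * (1/2::real)^n)"
      by (intro summable_mult summable_geometric) simp
    have nsum: "summable (\<lambda>n. norm (x n))"
      by (rule summable_comparison_test[OF _ geo]) (use xn in auto)
    have xsum: "summable x" by (rule summable_norm_cancel[OF nsum])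
    have s0: "s \<longlonglongrightarrow> 0"
    proof (rule tendsto_norm_zero_cancel, rule Lim_null_comparison)
      show "\<forall>\<^sub>F n in sequentially. norm (norm (s n)) \<le> norm w * (1/2)^n" using sn by simp
      show "(\<lambda>n. norm w * (1/2::real)^n) \<longlonglongrightarrow> 0"
        by (intro tendsto_mult_right_zero LIMSEQ_power_zero) simp
    qed
    have Ex: "E (x n) = s n - s (Suc n)" for n by (simp add: x_def s_Suc h_def)
    have "(\<lambda>n. s n - s (Suc n)) sums (s 0 - 0)" by (rule telescope_sums'[OF s0])
    then have "(\<lambda>n. E (x n)) sums w" by (simp add: Ex s_def)
    then have "E (suminf x) = w" using E.suminf[OF xsum] by (simp add: sums_iff)
    moreover have "norm (suminf x) \<le> (\<Sum>n. C * norm w * (1/2::real)^n)"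
      by (rule norm_suminf_le[OF xn geo])
    moreover have "(\<Sum>n. C * norm w * (1/2::real)^n) = 2 * C * norm w"
      by (simp add: suminf_mult suminf_geometric)
    ultimately show "\<exists>x. E x = w \<and> norm x \<le> 2 * C * norm w" by auto
  qed
qed


theorem mainTheorem9:
  fixes E0 :: "'x::chilbert \<Rightarrow> 'x" and A0 :: "'x \<Rightarrow> 'x" and D :: "'x set"
    and \<Gamma> :: "'x \<Rightarrow> 'y::chilbert" and \<omega> lam0 :: real
  assumes E0_bounded: "bounded_clinear E0"
    and E0_selfadj: "\<forall>x y. cinner (E0 x) y = cinner x (E0 y)"
    and E0_nonneg: "\<forall>x. 0 \<le> Re (cinner (E0 x) x)"
    and E0_closed_range: "closed (range E0)"
    and D_subspace: "csubspace D"
    and A0_linear: "clinear_on D A0"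
    and \<Gamma>_linear: "clinear_on D \<Gamma>"
    and \<Gamma>_bounded: "\<exists>C. \<forall>x\<in>D. norm (\<Gamma> x) \<le> C * graph_norm A0 x"
    and \<Gamma>_surj: "\<Gamma> ` D = UNIV"
    and dissip: "\<forall>x\<in>D. \<Gamma> x = 0 \<longrightarrow> Re (cinner (A0 x - scaleC (complex_of_real \<omega>) (E0 x)) x) \<le> 0"
    and lam0_gt: "lam0 > \<omega>"
    and lam0_surj: "\<forall>y. \<exists>x\<in>D. \<Gamma> x = 0 \<and> scaleC (complex_of_real lam0) (E0 x) - A0 x = y"
    and kernels: "\<forall>x\<in>D. E0 x = 0 \<and> A0 x = 0 \<and> \<Gamma> x = 0 \<longrightarrow> x = 0"
  shows "complex_of_real ` {\<omega><..} \<subseteq> pencil_rho (\<lambda>x. (E0 x, 0)) (\<lambda>x. (A0 x, \<Gamma> x)) D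
    \<and> cond_D 2 (pencil_rho (\<lambda>x. (E0 x, 0)) (\<lambda>x. (A0 x, \<Gamma> x)) D)
           (left_resolvent (\<lambda>x. (E0 x, 0)) (\<lambda>x. (A0 x, \<Gamma> x)) D)
    \<and> ((\<forall>x. E0 x = 0 \<longrightarrow> x = 0) \<longrightarrow>
         cond_D 1 (pencil_rho (\<lambda>x. (E0 x, 0)) (\<lambda>x. (A0 x, \<Gamma> x)) D)
           (right_resolvent (\<lambda>x. (E0 x, 0)) (\<lambda>x. (A0 x, \<Gamma> x)) D))"
proof -
  have ReC: "\<And>a b :: 'x. Re (cinner a b) = inner a b" by (simp add: cinner_def)
  have sa: "\<And>x y. inner (E0 x) y = inner x (E0 y)" using E0_selfadj ReC by metis
  have pos: "\<And>x. 0 \<le> inner (E0 x) x" using E0_nonneg ReC by metis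
  have E0add: "\<And>x y. E0 (x + y) = E0 x + E0 y" and E0scC: "\<And>a x. E0 (scaleC a x) = scaleC a (E0 x)"
    using E0_bounded by (auto simp: bounded_clinear_def clinear_on_def)
  have lin: "bounded_linear E0"
  proof -
    obtain K where "\<forall>x. norm (E0 x) \<le> norm x * K" using E0_bounded by (auto simp: bounded_clinear_def)
    then show ?thesis
      by (intro bounded_linear_intro[of _ K]) (auto simp: E0add E0scC[of "complex_of_real _", unfolded scaleC_of_real])
  qed
  interpret E0: bounded_linear E0 by fact
  have D0: "0 \<in> D" and Dadd: "\<And>x y. x \<in> D \<Longrightarrow> y \<in> D \<Longrightarrow> x + y \<in> D"
    and DscC: "\<And>a x. x \<in> D \<Longrightarrow> scaleC a x \<in> D"
    using D_subspace by (auto simp: csubspace_def)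
  have DscR: "\<And>r x. x \<in> D \<Longrightarrow> r *\<^sub>R x \<in> D" using DscC[of _ "complex_of_real _"] by (simp add: scaleC_of_real)
  have Ddiff: "\<And>x y. x \<in> D \<Longrightarrow> y \<in> D \<Longrightarrow> x - y \<in> D"
    using Dadd DscR[of _ "-1"] by (metis diff_conv_add_uminus scaleR_minus1_left)
  have A0add: "\<And>x y. x \<in> D \<Longrightarrow> y \<in> D \<Longrightarrow> A0 (x + y) = A0 x + A0 y"
    and A0scC: "\<And>a x. x \<in> D \<Longrightarrow> A0 (scaleC a x) = scaleC a (A0 x)"
    using A0_linear by (auto simp: clinear_on_def)
  have A0scR: "\<And>r x. x \<in> D \<Longrightarrow> A0 (r *\<^sub>R x) = r *\<^sub>R A0 x"
    using A0scC[of _ "complex_of_real _"] by (simp add: scaleC_of_real)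
  have A0diff: "\<And>x y. x \<in> D \<Longrightarrow> y \<in> D \<Longrightarrow> A0 (x - y) = A0 x - A0 y"
  proof -
    fix x y assume xy: "x \<in> D" "y \<in> D"
    have 1: "A0 (x + (-1) *\<^sub>R y) = A0 x + A0 ((-1) *\<^sub>R y)" by (rule A0add[OF xy(1) DscR[OF xy(2)]])
    have 2: "A0 ((-1) *\<^sub>R y) = (-1) *\<^sub>R A0 y" by (rule A0scR[OF xy(2)])
    from 1 2 show "A0 (x - y) = A0 x - A0 y" by simp
  qed
  have Gadd: "\<And>x y. x \<in> D \<Longrightarrow> y \<in> D \<Longrightarrow> \<Gamma> (x + y) = \<Gamma> x + \<Gamma> y"
    and GscC: "\<And>a x. x \<in> D \<Longrightarrow> \<Gamma> (scaleC a x) = scaleC a (\<Gamma> x)"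
    using \<Gamma>_linear by (auto simp: clinear_on_def)
  have GscR: "\<And>r x. x \<in> D \<Longrightarrow> \<Gamma> (r *\<^sub>R x) = r *\<^sub>R \<Gamma> x"
    using GscC[of _ "complex_of_real _"] by (simp add: scaleC_of_real)
  have Gdiff: "\<And>x y. x \<in> D \<Longrightarrow> y \<in> D \<Longrightarrow> \<Gamma> (x - y) = \<Gamma> x - \<Gamma> y"
  proof -
    fix x y assume xy: "x \<in> D" "y \<in> D"
    have 1: "\<Gamma> (x + (-1) *\<^sub>R y) = \<Gamma> x + \<Gamma> ((-1) *\<^sub>R y)" by (rule Gadd[OF xy(1) DscR[OF xy(2)]])
    have 2: "\<Gamma> ((-1) *\<^sub>R y) = (-1) *\<^sub>R \<Gamma> y" by (rule GscR[OF xy(2)])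
    from 1 2 show "\<Gamma> (x - y) = \<Gamma> x - \<Gamma> y" by simp
  qed
  have diss: "\<And>x. x \<in> D \<Longrightarrow> \<Gamma> x = 0 \<Longrightarrow> inner (A0 x - \<omega> *\<^sub>R E0 x) x \<le> 0"
    using dissip ReC by (simp add: scaleC_of_real)
  have est: "(t - \<omega>) * inner (E0 x) x \<le> - inner (A0 x - t *\<^sub>R E0 x) x" if "x \<in> D" "\<Gamma> x = 0" for t x
  proof -
    have "inner (A0 x - \<omega> *\<^sub>R E0 x) x = inner (A0 x - t *\<^sub>R E0 x) x + (t - \<omega>) * inner (E0 x) x"
      by (simp add: inner_diff_left algebra_simps)
    then show ?thesis using diss[OF that] by simp
  qed
  obtain K where K: "K > 0" "\<And>x. norm (E0 x) \<le> K * norm x" "\<And>x. (norm (E0 x))^2 \<le> K * inner (E0 x) x"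
    using form_K[OF lin sa pos] by blast
  obtain C1 where C1: "C1 \<ge> 0" "\<And>w. w \<in> range E0 \<Longrightarrow> \<exists>a. E0 a = w \<and> norm a \<le> C1 * norm w"
    using exact_preimage[OF lin E0_closed_range] by blast
  have I: "inner (E0 a) d \<le> C1 * norm (E0 a) * norm (E0 d)" for a d
  proof -
    obtain a' where a': "E0 a' = E0 a" "norm a' \<le> C1 * norm (E0 a)" using C1(2)[of "E0 a"] by blast
    have "inner (E0 a) d = inner a' (E0 d)" using sa a'(1) by metis
    also have "\<dots> \<le> norm a' * norm (E0 d)" by (rule norm_cauchy_schwarz)
    also have "\<dots> \<le> C1 * norm (E0 a) * norm (E0 d)" using a'(2) by (simp add: mult_right_mono)
    finally show ?thesis .
  qed

  define S where "S t \<longleftrightarrow> (\<forall>y. \<exists>x\<in>D. \<Gamma> x = 0 \<and> t *\<^sub>R E0 x - A0 x = y)" for t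
  define L where "L = K * C1 + 1"
  have KC1: "0 \<le> K * C1" using K(1) C1(1) by simp
  have L: "L \<ge> 1" "K * C1 \<le> L" using KC1 by (simp_all add: L_def)
  have inj: "x = 0" if "t > \<omega>" "x \<in> D" "\<Gamma> x = 0" "t *\<^sub>R E0 x - A0 x = 0" for t x
  proof -
    have "A0 x - t *\<^sub>R E0 x = 0" using that(4) by (simp add: algebra_simps)
    then have "(t - \<omega>) * inner (E0 x) x \<le> 0" using est[OF that(2,3), of t] by simp
    then have "inner (E0 x) x \<le> 0" using that(1) by (simp add: mult_le_0_iff)
    then have "inner (E0 x) x = 0" using pos[of x] by simp
    then have "(norm (E0 x))^2 \<le> 0" using K(3)[of x] by simp
    then have E0x: "E0 x = 0" by simp
    then have "A0 x = 0" using that(4) by simp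
    then show ?thesis using kernels that E0x by blast
  qed
  have step: "S t" if a: "a > \<omega>" "S a" and close: "\<bar>t - a\<bar> \<le> (a - \<omega>) / (2 * L)" for a t
  proof -
    from a(2) obtain T where T: "\<And>z. T z \<in> D \<and> \<Gamma> (T z) = 0 \<and> a *\<^sub>R E0 (T z) - A0 (T z) = z"
      unfolding S_def by metis
    define \<mu> where "\<mu> = a - t"
    have "\<bar>\<mu>\<bar> * (2 * L) \<le> a - \<omega>" using close L by (simp add: \<mu>_def field_simps abs_minus_commute)
    then have \<mu>: "\<bar>\<mu>\<bar> * L \<le> (a - \<omega>) / 2" by simp
    show "S t" unfolding S_def
    proof
      fix y
      define f where "f w = E0 (T (y + \<mu> *\<^sub>R w))" for w
      have "\<exists>!w\<in>range E0. f w = w"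
      proof (rule Banach_fix[where c="1/2"])
        show "complete (range E0)" using E0_closed_range complete_eq_closed by blast
        show "range E0 \<noteq> {}" by simp
        show "0 \<le> (1/2::real)" "(1/2::real) < 1" by simp_all
        show "f ` range E0 \<subseteq> range E0" by (auto simp: f_def)
        fix w1 w2 assume w: "w1 \<in> range E0" "w2 \<in> range E0"
        define x1 where "x1 = T (y + \<mu> *\<^sub>R w1)"
        define x2 where "x2 = T (y + \<mu> *\<^sub>R w2)"
        define d where "d = x1 - x2"
        have x1: "x1 \<in> D" "\<Gamma> x1 = 0" "a *\<^sub>R E0 x1 - A0 x1 = y + \<mu> *\<^sub>R w1" using T x1_def by auto
        have x2: "x2 \<in> D" "\<Gamma> x2 = 0" "a *\<^sub>R E0 x2 - A0 x2 = y + \<mu> *\<^sub>R w2" using T x2_def by auto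
        have dD: "d \<in> D" using x1 x2 Ddiff by (simp add: d_def)
        have Gd: "\<Gamma> d = 0" using x1 x2 Gdiff by (simp add: d_def)
        have eqd: "A0 d - a *\<^sub>R E0 d = - (\<mu> *\<^sub>R (w1 - w2))"
        proof -
          have "A0 d - a *\<^sub>R E0 d = - (a *\<^sub>R E0 x1 - A0 x1) + (a *\<^sub>R E0 x2 - A0 x2)"
            using A0diff[OF x1(1) x2(1)] by (simp add: d_def E0.diff algebra_simps)
          also have "\<dots> = - (\<mu> *\<^sub>R (w1 - w2))" using x1(3) x2(3) by (simp add: algebra_simps)
          finally show ?thesis .
        qed
        obtain p q where pq: "w1 = E0 p" "w2 = E0 q" using w by auto
        define u where "u = p - q"
        have u: "w1 - w2 = E0 u" using pq by (simp add: u_def E0.diff)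
        have "(a - \<omega>) * inner (E0 d) d \<le> - inner (A0 d - a *\<^sub>R E0 d) d" by (rule est[OF dD Gd])
        also have "\<dots> = \<mu> * inner (E0 u) d" using u eqd by simp
        also have "\<dots> \<le> \<bar>\<mu>\<bar> * (C1 * norm (E0 u) * norm (E0 d))"
        proof (cases "\<mu> \<ge> 0")
          case True then show ?thesis using I[of u d] by (simp add: mult_left_mono)
        next
          case False
          have "\<mu> * inner (E0 u) d = (-\<mu>) * inner (E0 (-u)) d" by (simp add: E0.neg)
          also have "\<dots> \<le> (-\<mu>) * (C1 * norm (E0 (-u)) * norm (E0 d))"
            using I[of "-u" d] False by (simp add: mult_left_mono)
          finally show ?thesis using False by (simp add: E0.neg)
        qed
        finally have 1: "(a - \<omega>) * inner (E0 d) d \<le> \<bar>\<mu>\<bar> * (C1 * norm (w1 - w2) * norm (E0 d))"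
          using u by simp
        have "(a - \<omega>) * (norm (E0 d))^2 \<le> (a - \<omega>) * (K * inner (E0 d) d)"
          using K(3)[of d] a(1) by (intro mult_left_mono) auto
        also have "\<dots> = K * ((a - \<omega>) * inner (E0 d) d)" by simp
        also have "\<dots> \<le> K * (\<bar>\<mu>\<bar> * (C1 * norm (w1 - w2) * norm (E0 d)))"
          using 1 K(1) by (intro mult_left_mono) auto
        finally have 2: "(a - \<omega>) * (norm (E0 d))^2 \<le> (K * \<bar>\<mu>\<bar> * C1 * norm (w1 - w2)) * norm (E0 d)"
          by (simp add: algebra_simps)
        have 3: "(a - \<omega>) * norm (E0 d) \<le> K * \<bar>\<mu>\<bar> * C1 * norm (w1 - w2)"
          by (rule arith1[OF _ _ 2]) (use K(1) C1(1) in simp_all)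
        have "K * \<bar>\<mu>\<bar> * C1 * norm (w1 - w2) = \<bar>\<mu>\<bar> * norm (w1 - w2) * (K * C1)" by simp
        also have "\<dots> \<le> \<bar>\<mu>\<bar> * norm (w1 - w2) * L" using L(2) by (intro mult_left_mono) auto
        also have "\<dots> = (\<bar>\<mu>\<bar> * L) * norm (w1 - w2)" by simp
        also have "\<dots> \<le> (a - \<omega>) / 2 * norm (w1 - w2)" using \<mu> by (intro mult_right_mono) auto
        finally have "(a - \<omega>) * norm (E0 d) \<le> (a - \<omega>) * (1/2 * norm (w1 - w2))" using 3 by simp
        then have 4: "norm (E0 d) \<le> 1/2 * norm (w1 - w2)" using a(1) by simp
        have "f w1 - f w2 = E0 d" by (simp add: f_def d_def x1_def x2_def E0.diff)
        then show "dist (f w1) (f w2) \<le> 1/2 * dist w1 w2" using 4 by (simp add: dist_norm)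
      qed
      then obtain w where w: "w \<in> range E0" "f w = w" by blast
      define x where "x = T (y + \<mu> *\<^sub>R w)"
      have Ex: "E0 x = w" using w(2) by (simp add: f_def x_def)
      have "a *\<^sub>R E0 x - A0 x = y + \<mu> *\<^sub>R w" using T by (simp add: x_def)
      then have "t *\<^sub>R E0 x - A0 x = y" using Ex by (simp add: \<mu>_def algebra_simps)
      moreover have "x \<in> D" "\<Gamma> x = 0" using T by (simp_all add: x_def)
      ultimately show "\<exists>x\<in>D. \<Gamma> x = 0 \<and> t *\<^sub>R E0 x - A0 x = y" by blast
    qed
  qed

  define \<delta> where "\<delta> = 1 / (2 * L)"
  have \<delta>: "0 < \<delta>" "\<delta> \<le> 1/2" using L by (simp_all add: \<delta>_def field_simps)
  have Slam0: "S lam0" using lam0_surj by (simp add: S_def scaleC_of_real)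
  have rng: "\<forall>t. \<omega> + (lam0 - \<omega>) * (1 - \<delta>)^n \<le> t \<and> t \<le> \<omega> + (lam0 - \<omega>) * (1 + \<delta>)^n \<longrightarrow> S t" for n
  proof (induction n)
    case 0 then show ?case using Slam0 by auto
  next
    case (Suc n)
    define lo where "lo = \<omega> + (lam0 - \<omega>) * (1 - \<delta>)^n"
    define hi where "hi = \<omega> + (lam0 - \<omega>) * (1 + \<delta>)^n"
    have p1: "(1 - \<delta>)^n > 0" using \<delta> by simp
    have p2: "(1 - \<delta>)^n \<le> (1 + \<delta>)^n" using \<delta> by (intro power_mono) auto
    have lohi: "lo \<le> hi" using p2 lam0_gt by (simp add: lo_def hi_def mult_left_mono)
    have IH: "\<And>t. lo \<le> t \<Longrightarrow> t \<le> hi \<Longrightarrow> S t" using Suc.IH by (simp add: lo_def hi_def)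
    have Slo: "S lo" and Shi: "S hi" using IH lohi by auto
    have lo_gt: "lo > \<omega>" using p1 lam0_gt by (simp add: lo_def)
    have hi_gt: "hi > \<omega>" using lohi lo_gt by simp
    show ?case
    proof (intro allI impI)
      fix t assume t: "\<omega> + (lam0 - \<omega>) * (1 - \<delta>)^Suc n \<le> t \<and> t \<le> \<omega> + (lam0 - \<omega>) * (1 + \<delta>)^Suc n"
      consider "t < lo" | "lo \<le> t \<and> t \<le> hi" | "hi < t" by linarith
      then show "S t"
      proof cases
        case 1
        have "lo - t \<le> (lo - \<omega>) * \<delta>" using t by (simp add: lo_def algebra_simps)
        then have "\<bar>t - lo\<bar> \<le> (lo - \<omega>) / (2 * L)" using 1 by (simp add: \<delta>_def)
        then show ?thesis using step[OF lo_gt Slo] by blast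
      next
        case 2 then show ?thesis using IH by auto
      next
        case 3
        have "t - hi \<le> (hi - \<omega>) * \<delta>" using t by (simp add: hi_def algebra_simps)
        then have "\<bar>t - hi\<bar> \<le> (hi - \<omega>) / (2 * L)" using 3 by (simp add: \<delta>_def)
        then show ?thesis using step[OF hi_gt Shi] by blast
      qed
    qed
  qed
  have Sall: "S t" if t: "t > \<omega>" for t
  proof -
    have r: "(t - \<omega>) / (lam0 - \<omega>) > 0" using t lam0_gt by simp
    obtain n1 where n1: "(t - \<omega>) / (lam0 - \<omega>) < (1 + \<delta>)^n1" using real_arch_pow[of "1+\<delta>"] \<delta> by auto
    obtain n2 where n2: "(1 - \<delta>)^n2 < (t - \<omega>) / (lam0 - \<omega>)"
      using real_arch_pow_inv[OF r, of "1 - \<delta>"] \<delta> by auto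
    have "(1 + \<delta>)^n1 \<le> (1+\<delta>)^(n1+n2)" by (rule power_increasing) (use \<delta> in auto)
    then have "(lam0 - \<omega>) * (1 + \<delta>)^n1 \<le> (lam0 - \<omega>) * (1+\<delta>)^(n1+n2)" using lam0_gt by (intro mult_left_mono) auto
    moreover have "t - \<omega> < (lam0 - \<omega>) * (1 + \<delta>)^n1" using n1 lam0_gt by (simp add: pos_divide_less_eq mult.commute)
    ultimately have up: "t - \<omega> \<le> (lam0 - \<omega>) * (1+\<delta>)^(n1+n2)" by linarith
    have "(1 - \<delta>)^(n1+n2) \<le> (1-\<delta>)^n2" by (rule power_decreasing) (use \<delta> in auto)
    then have "(lam0 - \<omega>) * (1 - \<delta>)^(n1+n2) \<le> (lam0 - \<omega>) * (1-\<delta>)^n2" using lam0_gt by (intro mult_left_mono) auto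
    moreover have "(lam0 - \<omega>) * (1 - \<delta>)^n2 < t - \<omega>" using n2 lam0_gt by (simp add: pos_less_divide_eq mult.commute)
    ultimately have "(lam0 - \<omega>) * (1-\<delta>)^(n1+n2) \<le> t - \<omega>" by linarith
    then show ?thesis using up rng[of "n1+n2"] by auto
  qed
  have rho: "complex_of_real t \<in> pencil_rho (\<lambda>x. (E0 x, 0::'y)) (\<lambda>x. (A0 x, \<Gamma> x)) D" if t: "t > \<omega>" for t
  proof -
    have phi: "scaleC (complex_of_real t) (E0 x, 0::'y) - (A0 x, \<Gamma> x) = (t *\<^sub>R E0 x - A0 x, - \<Gamma> x)" for x
      by (simp add: scaleC_prod_def scaleC_of_real)
    have "inj_on (\<lambda>x. (t *\<^sub>R E0 x - A0 x, - \<Gamma> x)) D"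
    proof (rule inj_onI)
      fix x y assume xy: "x \<in> D" "y \<in> D" "(t *\<^sub>R E0 x - A0 x, - \<Gamma> x) = (t *\<^sub>R E0 y - A0 y, - \<Gamma> y)"
      have "x - y = 0"
      proof (rule inj[OF t Ddiff[OF xy(1,2)]])
        show "\<Gamma> (x - y) = 0" using xy Gdiff by simp
        have "t *\<^sub>R E0 x - A0 x = t *\<^sub>R E0 y - A0 y" using xy(3) by simp
        then show "t *\<^sub>R E0 (x - y) - A0 (x - y) = 0" unfolding A0diff[OF xy(1,2)] E0.diff
          by (simp add: algebra_simps)
      qed
      then show "x = y" by simp
    qed
    moreover have "(\<lambda>x. (t *\<^sub>R E0 x - A0 x, - \<Gamma> x)) ` D = UNIV"
    proof -
      have "z \<in> (\<lambda>x. (t *\<^sub>R E0 x - A0 x, - \<Gamma> x)) ` D" for z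
      proof -
        obtain f g where z: "z = (f, g)" by (cases z)
        have "- g \<in> \<Gamma> ` D" using \<Gamma>_surj by simp
        then obtain x1 where x1: "x1 \<in> D" "\<Gamma> x1 = - g" by (metis imageE)
        have ex2: "\<exists>x\<in>D. \<Gamma> x = 0 \<and> t *\<^sub>R E0 x - A0 x = f - (t *\<^sub>R E0 x1 - A0 x1)"
          using Sall[OF t] by (simp only: S_def)
        then obtain x2 where x2: "x2 \<in> D" "\<Gamma> x2 = 0" "t *\<^sub>R E0 x2 - A0 x2 = f - (t *\<^sub>R E0 x1 - A0 x1)"
          by blast
        have c1: "t *\<^sub>R E0 (x1 + x2) - A0 (x1 + x2) = (t *\<^sub>R E0 x1 - A0 x1) + (t *\<^sub>R E0 x2 - A0 x2)"
          unfolding A0add[OF x1(1) x2(1)] E0.add by (simp add: scaleR_add_right)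
        have c2: "- \<Gamma> (x1 + x2) = g" unfolding Gadd[OF x1(1) x2(1)] using x1(2) x2(2) by simp
        have eq: "z = (t *\<^sub>R E0 (x1 + x2) - A0 (x1 + x2), - \<Gamma> (x1 + x2))"
          unfolding c1 c2 x2(3) z by simp
        show ?thesis
          by (rule image_eqI[where f="\<lambda>x. (t *\<^sub>R E0 x - A0 x, - \<Gamma> x)" and x="x1 + x2", OF eq Dadd[OF x1(1) x2(1)]])
      qed
      then show ?thesis by auto
    qed
    ultimately show ?thesis unfolding pencil_rho_def mem_Collect_eq bij_betw_def phi by blast
  qed

  let ?E = "\<lambda>x. (E0 x, 0::'y)"
  let ?A = "\<lambda>x. (A0 x, \<Gamma> x)"
  have solve: "x \<in> D \<and> A0 x - t *\<^sub>R E0 x = fst z \<and> \<Gamma> x = snd z"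
    if t: "t > \<omega>" and x: "x = pencil_inv ?E ?A D (complex_of_real t) z" for t z x
  proof -
    have "x \<in> D \<and> ?A x - scaleC (complex_of_real t) (?E x) = z"
      using pencil_inv_prop[OF rho[OF t]] x by blast
    then show ?thesis by (auto simp: scaleC_prod_def scaleC_of_real)
  qed
  have part2: "cond_D 2 (pencil_rho ?E ?A D) (left_resolvent ?E ?A D)"
    unfolding cond_D_def
  proof (rule exI[of _ "\<omega> + 1"], rule exI[of _ "K * C1 + 1"], intro conjI allI impI ballI)
    show "0 < K * C1 + 1" using KC1 by simp
  next
    fix t :: real assume "\<omega> + 1 \<le> t"
    then show "complex_of_real t \<in> pencil_rho ?E ?A D" using rho by simp
  next
    fix t :: real and v assume t: "\<omega> + 1 < t"
      and v: "v \<in> range (left_resolvent ?E ?A D (complex_of_real (\<omega> + 1)) ^^ (2 - 1))"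
    have "(2::nat) - 1 = Suc 0" by simp
    then obtain z where vz: "v = left_resolvent ?E ?A D (complex_of_real (\<omega> + 1)) z" using v by auto
    define x'' where "x'' = pencil_inv ?E ?A D (complex_of_real (\<omega> + 1)) z"
    have v2: "v = (E0 x'', 0)" using vz by (simp add: left_resolvent_def x''_def)
    define x where "x = pencil_inv ?E ?A D (complex_of_real t) v"
    have "x \<in> D \<and> A0 x - t *\<^sub>R E0 x = fst v \<and> \<Gamma> x = snd v" using solve t x_def by simp
    then have xD: "x \<in> D" and eqx: "A0 x - t *\<^sub>R E0 x = E0 x''" and Gx: "\<Gamma> x = 0" using v2 by auto
    have Rt: "left_resolvent ?E ?A D (complex_of_real t) v = (E0 x, 0)" by (simp add: left_resolvent_def x_def)
    have "(t - \<omega>) * inner (E0 x) x \<le> - inner (A0 x - t *\<^sub>R E0 x) x" by (rule est[OF xD Gx])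
    also have "\<dots> = inner (E0 (-x'')) x" using eqx by (simp add: E0.neg)
    also have "\<dots> \<le> C1 * norm (E0 (-x'')) * norm (E0 x)" by (rule I)
    finally have 1: "(t - \<omega>) * inner (E0 x) x \<le> C1 * norm (E0 x'') * norm (E0 x)" by (simp add: E0.neg)
    have "(t - \<omega>) * (norm (E0 x))^2 \<le> (t - \<omega>) * (K * inner (E0 x) x)"
      using K(3)[of x] t by (intro mult_left_mono) auto
    also have "\<dots> = K * ((t - \<omega>) * inner (E0 x) x)" by simp
    also have "\<dots> \<le> K * (C1 * norm (E0 x'') * norm (E0 x))" using 1 K(1) by (intro mult_left_mono) auto
    finally have 2: "(t - \<omega>) * (norm (E0 x))^2 \<le> (K * C1 * norm (E0 x'')) * norm (E0 x)"
      by (simp add: algebra_simps)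
    have 3: "(t - \<omega>) * norm (E0 x) \<le> (K * C1) * norm (E0 x'')"
      using arith1[OF _ _ 2] KC1 by simp
    have "norm (E0 x) \<le> (K * C1 + 1) / (t - (\<omega> + 1)) * norm (E0 x'')"
      by (rule arith2[OF _ _ 3]) (use t KC1 in auto)
    then show "norm (left_resolvent ?E ?A D (complex_of_real t) v) \<le> (K * C1 + 1) / (t - (\<omega> + 1)) * norm v"
      using Rt v2 by simp
  qed
  have part3: "cond_D 1 (pencil_rho ?E ?A D) (right_resolvent ?E ?A D)"
    if inj0: "\<forall>x. E0 x = 0 \<longrightarrow> x = 0"
    unfolding cond_D_def
  proof (rule exI[of _ "\<omega> + 1"], rule exI[of _ "C1 * (K * C1 * K) + 1"], intro conjI allI impI ballI)
    have II: "norm u \<le> C1 * norm (E0 u)" for u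
    proof -
      obtain a where a: "E0 a = E0 u" "norm a \<le> C1 * norm (E0 u)" using C1(2)[of "E0 u"] by blast
      have "E0 (a - u) = 0" using a(1) by (simp add: E0.diff)
      then have "a - u = 0" using inj0 by blast
      then have "a = u" by simp
      then show ?thesis using a(2) by simp
    qed
    have Q: "0 \<le> C1 * (K * C1 * K)" using KC1 K(1) C1(1) by simp
    show "0 < C1 * (K * C1 * K) + 1" using Q by simp
  next
    fix t :: real assume "\<omega> + 1 \<le> t"
    then show "complex_of_real t \<in> pencil_rho ?E ?A D" using rho by simp
  next
    fix t :: real and v assume t: "\<omega> + 1 < t"
    have II: "norm u \<le> C1 * norm (E0 u)" for u
    proof -
      obtain a where a: "E0 a = E0 u" "norm a \<le> C1 * norm (E0 u)" using C1(2)[of "E0 u"] by blast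
      have "E0 (a - u) = 0" using a(1) by (simp add: E0.diff)
      then have "a - u = 0" using inj0 by blast
      then have "a = u" by simp
      then show ?thesis using a(2) by simp
    qed
    have Q: "0 \<le> C1 * (K * C1 * K)" using KC1 K(1) C1(1) by simp
    define x where "x = pencil_inv ?E ?A D (complex_of_real t) (E0 v, 0)"
    have "x \<in> D \<and> A0 x - t *\<^sub>R E0 x = fst (E0 v, 0::'y) \<and> \<Gamma> x = snd (E0 v, 0::'y)"
      using solve t x_def by simp
    then have xD: "x \<in> D" and eqx: "A0 x - t *\<^sub>R E0 x = E0 v" and Gx: "\<Gamma> x = 0" by auto
    have Rt: "right_resolvent ?E ?A D (complex_of_real t) v = x" by (simp add: right_resolvent_def x_def)
    have "(t - \<omega>) * inner (E0 x) x \<le> - inner (A0 x - t *\<^sub>R E0 x) x" by (rule est[OF xD Gx])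
    also have "\<dots> = inner (E0 (-v)) x" using eqx by (simp add: E0.neg)
    also have "\<dots> \<le> C1 * norm (E0 (-v)) * norm (E0 x)" by (rule I)
    also have "\<dots> = C1 * norm (E0 v) * norm (E0 x)" by (simp add: E0.neg)
    also have "\<dots> \<le> C1 * (K * norm v) * norm (E0 x)"
      using K(2)[of v] C1(1) by (intro mult_right_mono mult_left_mono) auto
    finally have 1: "(t - \<omega>) * inner (E0 x) x \<le> C1 * (K * norm v) * norm (E0 x)" .
    have "(t - \<omega>) * (norm (E0 x))^2 \<le> (t - \<omega>) * (K * inner (E0 x) x)"
      using K(3)[of x] t by (intro mult_left_mono) auto
    also have "\<dots> = K * ((t - \<omega>) * inner (E0 x) x)" by simp
    also have "\<dots> \<le> K * (C1 * (K * norm v) * norm (E0 x))" using 1 K(1) by (intro mult_left_mono) auto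
    finally have 2: "(t - \<omega>) * (norm (E0 x))^2 \<le> (K * C1 * K * norm v) * norm (E0 x)"
      by (simp add: algebra_simps)
    have 3: "(t - \<omega>) * norm (E0 x) \<le> K * C1 * K * norm v"
      using arith1[OF _ _ 2] KC1 K(1) by simp
    have "(t - \<omega>) * norm x \<le> (t - \<omega>) * (C1 * norm (E0 x))" using II[of x] t by (intro mult_left_mono) auto
    also have "\<dots> = C1 * ((t - \<omega>) * norm (E0 x))" by simp
    also have "\<dots> \<le> C1 * (K * C1 * K * norm v)" using 3 C1(1) by (intro mult_left_mono) auto
    finally have 4: "(t - \<omega>) * norm x \<le> (C1 * (K * C1 * K)) * norm v" by (simp add: algebra_simps)
    have "norm x \<le> (C1 * (K * C1 * K) + 1) / (t - (\<omega> + 1)) * norm v"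
      by (rule arith2[OF _ _ 4]) (use t Q in auto)
    then show "norm (right_resolvent ?E ?A D (complex_of_real t) v) \<le> (C1 * (K * C1 * K) + 1) / (t - (\<omega> + 1)) * norm v"
      using Rt by simp
  qed
  show ?thesis using rho part2 part3 by auto
qed
end
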